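(* Let $\alpha_1,\alpha_2$ be nonzero real constants with $\alpha_1\neq\alpha_2$, and consider the lattice Schwarzian KdV equation for a field $x_{n,m}$, $(n,m)\in\mathbb{Z}^2$: $$\mathbb{Q}\equiv \alpha_1 (x_{n,m}-x_{n,m+1})(x_{n+1,m}-x_{n+1,m+1})-\alpha_2 (x_{n,m}-x_{n+1,m})(x_{n,m+1}-x_{n+1,m+1})=0.$$ Consider infinitesimal generators of the form $\widehat X_{n,m}=\Phi_{n,m}(x_{n,m})\,\partial_{x_{n,m}}$, where for each $(n,m)$ the function $\Phi_{n,m}$ is a polynomial $\Phi_{n,m}(x)=\sum_{k=0}^{\gamma}\Phi^{(k)}_{n,m}x^k$ with coefficients $\Phi^{(k)}_{n,m}$ depending on $(n,m)$. Then $\widehat X_{n,m}$ is a Lie point symmetry of $\mathbb{Q}=0$ if and only if $$\Phi_{n,m}(x)=c_0+c_1 x+c_2 x^2$$ with constants $c_0,c_1,c_2$ independent of $n$ and $m$. Equivalently, the Lie point symmetry algebra (of this form) is spanned by $\widehat X^{(0)}=\partial_{x_{n,m}}$, $\widehat X^{(1)}=x_{n,m}\partial_{x_{n,m}}$, $\widehat X^{(2)}=x_{n,m}^2\partial_{x_{n,m}}$, which satisfy $[\widehat X^{(0)},\widehat X^{(1)}]=\widehat X^{(0)}$, $[\widehat X^{(1)},\widehat X^{(2)}]=\widehat X^{(2)}$, $[\widehat X^{(0)},\widehat X^{(2)}]=2\widehat X^{(1)}$, i.e. form a Lie algebra isomorphic to $\mathfrak{sl}(2)$.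
   Context: A generator $\widehat X_{n,m}=\Phi_{n,m}\,\partial_{x_{n,m}}$ is called a (Lie point) symmetry of $\mathbb{Q}=0$ if its prolongation annihilates $\mathbb{Q}$ on solutions, i.e. $$\Phi_{n,m}\frac{\partial \mathbb{Q}}{\partial x_{n,m}}+\Phi_{n+1,m}\frac{\partial \mathbb{Q}}{\partial x_{n+1,m}}+\Phi_{n,m+1}\frac{\partial \mathbb{Q}}{\partial x_{n,m+1}}+\Phi_{n+1,m+1}\frac{\partial \mathbb{Q}}{\partial x_{n+1,m+1}}=0$$ whenever $\mathbb{Q}=0$ (concretely: after solving $\mathbb{Q}=0$ for $x_{n+1,m+1}$ in terms of $x_{n,m},x_{n+1,m},x_{n,m+1}$ and substituting, the expression vanishes identically in $x_{n,m},x_{n+1,m},x_{n,m+1}$). Here $\Phi_{n+i,m+j}$ denotes $\Phi_{n+i,m+j}(x_{n+i,m+j})$. *)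

theory Defs
  imports Complex_Main "HOL-Computational_Algebra.Polynomial"
begin

text \<open>Lattice Schwarzian KdV quad-equation
  Q(a,b,c,d) with a = x_{n,m}, b = x_{n+1,m}, c = x_{n,m+1}, d = x_{n+1,m+1}.\<close>
definition lsQ :: "real \<Rightarrow> real \<Rightarrow> real \<Rightarrow> real \<Rightarrow> real \<Rightarrow> real \<Rightarrow> real" where
  "lsQ a1 a2 a b c d = a1 * (a - c) * (b - d) - a2 * (a - b) * (c - d)"

definition dQa :: "real \<Rightarrow> real \<Rightarrow> real \<Rightarrow> real \<Rightarrow> real \<Rightarrow> real \<Rightarrow> real" where
  "dQa a1 a2 a b c d = a1 * (b - d) - a2 * (c - d)"
definition dQb :: "real \<Rightarrow> real \<Rightarrow> real \<Rightarrow> real \<Rightarrow> real \<Rightarrow> real \<Rightarrow> real" where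
  "dQb a1 a2 a b c d = a1 * (a - c) + a2 * (c - d)"
definition dQc :: "real \<Rightarrow> real \<Rightarrow> real \<Rightarrow> real \<Rightarrow> real \<Rightarrow> real \<Rightarrow> real" where
  "dQc a1 a2 a b c d = - a1 * (b - d) - a2 * (a - b)"
definition dQd :: "real \<Rightarrow> real \<Rightarrow> real \<Rightarrow> real \<Rightarrow> real \<Rightarrow> real \<Rightarrow> real" where
  "dQd a1 a2 a b c d = - a1 * (a - c) + a2 * (a - b)"

text \<open>Coefficient of d in Q (Q is affine in d): Q = lsQcoef * d + const.\<close>
definition lsQcoef :: "real \<Rightarrow> real \<Rightarrow> real \<Rightarrow> real \<Rightarrow> real \<Rightarrow> real" where
  "lsQcoef a1 a2 a b c = a2 * (a - b) - a1 * (a - c)"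

text \<open>Solution of Q = 0 for d = x_{n+1,m+1} (valid where lsQcoef is nonzero).\<close>
definition lsSol :: "real \<Rightarrow> real \<Rightarrow> real \<Rightarrow> real \<Rightarrow> real \<Rightarrow> real" where
  "lsSol a1 a2 a b c = (a2 * (a - b) * c - a1 * (a - c) * b) / lsQcoef a1 a2 a b c"

text \<open>Lie point symmetry condition for the generator Phi_{n,m}(x_{n,m}) d/dx_{n,m}:
  the prolonged generator applied to Q vanishes after substituting the solution
  x_{n+1,m+1} of Q = 0, identically in x_{n,m}, x_{n+1,m}, x_{n,m+1}
  (i.e. wherever the substitution is defined).\<close>
definition is_lie_symmetry ::
  "real \<Rightarrow> real \<Rightarrow> (int \<Rightarrow> int \<Rightarrow> real \<Rightarrow> real) \<Rightarrow> bool" where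
  "is_lie_symmetry a1 a2 Phi \<longleftrightarrow>
     (\<forall>n m a b c. lsQcoef a1 a2 a b c \<noteq> 0 \<longrightarrow>
        (let d = lsSol a1 a2 a b c in
           Phi n m a * dQa a1 a2 a b c d + Phi (n+1) m b * dQb a1 a2 a b c d
         + Phi n (m+1) c * dQc a1 a2 a b c d + Phi (n+1) (m+1) d * dQd a1 a2 a b c d = 0))"

end

theory Submission
  imports Defs
begin

lemma sol_Q: "lsQcoef p q a b c \<noteq> 0 \<Longrightarrow> lsQ p q a b c (lsSol p q a b c) = 0"
  unfolding lsQ_def lsSol_def by (simp add: lsQcoef_def field_simps)

lemma if_dir: "is_lie_symmetry a1 a2 (\<lambda>n m x. c0 + c1*x + c2*x^2)"
  unfolding is_lie_symmetry_def Let_def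
proof (intro allI impI)
  fix n m :: int and a b c :: real
  assume h: "lsQcoef a1 a2 a b c \<noteq> 0"
  define d where "d = lsSol a1 a2 a b c"
  have Q: "lsQ a1 a2 a b c d = 0" using sol_Q[OF h] d_def by simp
  have S0: "dQa a1 a2 a b c d + dQb a1 a2 a b c d + dQc a1 a2 a b c d + dQd a1 a2 a b c d = 0"
    unfolding dQa_def dQb_def dQc_def dQd_def by algebra
  have S1: "a * dQa a1 a2 a b c d + b * dQb a1 a2 a b c d + c * dQc a1 a2 a b c d + d * dQd a1 a2 a b c d = 2 * lsQ a1 a2 a b c d"
    unfolding dQa_def dQb_def dQc_def dQd_def lsQ_def by algebra
  have S2: "a^2 * dQa a1 a2 a b c d + b^2 * dQb a1 a2 a b c d + c^2 * dQc a1 a2 a b c d + d^2 * dQd a1 a2 a b c d = (a+b+c+d) * lsQ a1 a2 a b c d"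
    unfolding dQa_def dQb_def dQc_def dQd_def lsQ_def by algebra
  have "(c0 + c1 * a + c2 * a\<^sup>2) * dQa a1 a2 a b c d + (c0 + c1 * b + c2 * b\<^sup>2) * dQb a1 a2 a b c d +
    (c0 + c1 * c + c2 * c\<^sup>2) * dQc a1 a2 a b c d + (c0 + c1 * d + c2 * d\<^sup>2) * dQd a1 a2 a b c d
    = c0 * (dQa a1 a2 a b c d + dQb a1 a2 a b c d + dQc a1 a2 a b c d + dQd a1 a2 a b c d)
     + c1 * (a * dQa a1 a2 a b c d + b * dQb a1 a2 a b c d + c * dQc a1 a2 a b c d + d * dQd a1 a2 a b c d)
     + c2 * (a^2 * dQa a1 a2 a b c d + b^2 * dQb a1 a2 a b c d + c^2 * dQc a1 a2 a b c d + d^2 * dQd a1 a2 a b c d)"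
    by (simp add: algebra_simps)
  also have "\<dots> = 0" using S0 S1 S2 Q by simp
  finally show "(c0 + c1 * a + c2 * a\<^sup>2) * dQa a1 a2 a b c d + (c0 + c1 * b + c2 * b\<^sup>2) * dQb a1 a2 a b c d +
    (c0 + c1 * c + c2 * c\<^sup>2) * dQc a1 a2 a b c d + (c0 + c1 * d + c2 * d\<^sup>2) * dQd a1 a2 a b c d = 0" .
qed

lemma rels:
  assumes S: "is_lie_symmetry a1 a2 Phi" and a1: "a1 \<noteq> 0" and a2: "a2 \<noteq> 0" and a12: "a1 \<noteq> a2"
  shows "Phi (n+1) m x = Phi n m x \<and> Phi n (m+1) x = Phi n m x"
proof -
  have S': "\<And>a b c. lsQcoef a1 a2 a b c \<noteq> 0 \<Longrightarrow>
           Phi n m a * dQa a1 a2 a b c (lsSol a1 a2 a b c) + Phi (n+1) m b * dQb a1 a2 a b c (lsSol a1 a2 a b c)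
         + Phi n (m+1) c * dQc a1 a2 a b c (lsSol a1 a2 a b c) + Phi (n+1) (m+1) (lsSol a1 a2 a b c) * dQd a1 a2 a b c (lsSol a1 a2 a b c) = 0"
    using S unfolding is_lie_symmetry_def Let_def by blast
  have E1: "a1 * Phi n m x + (a2 - a1) * Phi n (m+1) x - a2 * Phi (n+1) (m+1) x = 0"
  proof -
    have c: "lsQcoef a1 a2 x (x+1) x = - a2" by (simp add: lsQcoef_def)
    have s: "lsSol a1 a2 x (x+1) x = x" using a2 by (simp add: lsSol_def c)
    show ?thesis using S'[of x "x+1" x] a2 unfolding c s
      by (simp add: dQa_def dQb_def dQc_def dQd_def algebra_simps)
  qed
  have E2: "- a2 * Phi n m x + (a2 - a1) * Phi (n+1) m x + a1 * Phi (n+1) (m+1) x = 0"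
  proof -
    have c: "lsQcoef a1 a2 x x (x+1) = a1" by (simp add: lsQcoef_def)
    have s: "lsSol a1 a2 x x (x+1) = x" using a1 by (simp add: lsSol_def c)
    show ?thesis using S'[of x x "x+1"] a1 unfolding c s
      by (simp add: dQa_def dQb_def dQc_def dQd_def algebra_simps)
  qed
  have E3: "- a1 * Phi (n+1) m x + a2 * Phi n (m+1) x + (a1 - a2) * Phi (n+1) (m+1) x = 0"
  proof -
    have c: "lsQcoef a1 a2 (x-1) x x = a1 - a2" by (simp add: lsQcoef_def)
    have s: "lsSol a1 a2 (x-1) x x = x" using a12 by (simp add: lsSol_def c field_simps)
    show ?thesis using S'[of "x-1" x x] a12 unfolding c s
      by (simp add: dQa_def dQb_def dQc_def dQd_def algebra_simps)
  qed
  define u where "u = Phi n m x - Phi (n+1) (m+1) x"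
  define v where "v = Phi (n+1) m x - Phi (n+1) (m+1) x"
  define w where "w = Phi n (m+1) x - Phi (n+1) (m+1) x"
  have e1: "a1 * u + (a2 - a1) * w = 0" using E1 unfolding u_def w_def by (simp add: algebra_simps)
  have e2: "- a2 * u + (a2 - a1) * v = 0" using E2 unfolding u_def v_def by (simp add: algebra_simps)
  have e3: "- a1 * v + a2 * w = 0" using E3 unfolding v_def w_def by (simp add: algebra_simps)
  have "(a2 - a1) * (- a1 * v + a2 * w) = -2 * a1 * a2 * u"
  proof -
    have "(a2 - a1) * (- a1 * v + a2 * w) = - a1 * ((a2 - a1) * v) - a2 * (-(a2-a1) * w)" by algebra
    also have "\<dots> = - a1 * (a2 * u) - a2 * (a1 * u)"
    proof -
      have x1: "(a2 - a1) * v = a2 * u" using e2 by simp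
      have x2: "-(a2 - a1) * w = a1 * u" using e1 by (simp add: algebra_simps)
      show ?thesis unfolding x1 x2 ..
    qed
    finally show ?thesis by simp
  qed
  with e3 a1 a2 have u0: "u = 0" by simp
  with e1 a12 have "w = 0" by simp
  moreover from u0 e2 a12 have "v = 0" by simp
  ultimately show ?thesis using u0 unfolding u_def v_def w_def by simp
qed

lemma cont_pt:
  fixes f :: "real \<Rightarrow> real"
  assumes "isCont f x0" and "\<And>x. x \<noteq> x0 \<Longrightarrow> f x = 0"
  shows "f x0 = 0"
proof -
  have "(f \<longlongrightarrow> f x0) (at x0)" using assms(1) isCont_def by blast
  moreover have "(f \<longlongrightarrow> 0) (at x0)"
  proof -
    have "\<forall>\<^sub>F x in at x0. f x = 0" using assms(2) by (auto simp: eventually_at_filter)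
    then show ?thesis by (rule tendsto_eventually)
  qed
  ultimately show ?thesis by (rule tendsto_unique[OF at_neq_bot])
qed

lemma deg_le2:
  assumes S: "is_lie_symmetry a1 a2 (\<lambda>n m. poly p)" and a1: "a1 \<noteq> 0" and a2: "a2 \<noteq> 0" and a12: "a1 \<noteq> a2"
  shows "degree p \<le> 2"
proof (rule ccontr)
  assume "\<not> degree p \<le> 2"
  define N where "N = degree p"
  have N3: "N \<ge> 3" using \<open>\<not> degree p \<le> 2\<close> N_def by simp
  define L where "L b = a1 - a2 * b" for b :: real
  define Nn where "Nn b = (a1 - a2) * b" for b :: real
  define F where "F = poly p"
  have S': "\<And>a b c. lsQcoef a1 a2 a b c \<noteq> 0 \<Longrightarrow>
           F a * dQa a1 a2 a b c (lsSol a1 a2 a b c) + F b * dQb a1 a2 a b c (lsSol a1 a2 a b c)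
         + F c * dQc a1 a2 a b c (lsSol a1 a2 a b c) + F (lsSol a1 a2 a b c) * dQd a1 a2 a b c (lsSol a1 a2 a b c) = 0"
    using S unfolding is_lie_symmetry_def Let_def F_def by blast
  define R where "R b = F 0 * (a1*(b*L b - Nn b) - a2*(L b - Nn b)) + F b * (-a1 * L b + a2*(L b - Nn b))
      + F 1 * (-a1*(b * L b - Nn b) + a2*b*L b)" for b
  define h where "h b = L b^(N-2) * R b + (\<Sum>k\<le>N. coeff p k * Nn b^k * L b^(N-k))" for b
  have powsum: "L b ^ N * F (Nn b / L b) = (\<Sum>k\<le>N. coeff p k * Nn b^k * L b^(N-k))" if "L b \<noteq> 0" for b
  proof -
    have "L b ^ N * F (Nn b / L b) = (\<Sum>k\<le>N. L b ^ N * (coeff p k * (Nn b / L b)^k))"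
      unfolding F_def poly_altdef N_def sum_distrib_left ..
    also have "\<dots> = (\<Sum>k\<le>N. coeff p k * Nn b^k * L b^(N-k))"
    proof (rule sum.cong)
      fix k assume "k \<in> {..N}"
      then have "L b ^ N = L b ^ k * L b ^ (N - k)" by (simp add: power_add[symmetric])
      then show "L b ^ N * (coeff p k * (Nn b / L b)^k) = coeff p k * Nn b^k * L b^(N-k)"
        using that by (simp add: power_divide field_simps)
    qed simp
    finally show ?thesis .
  qed
  have hz: "h b = 0" if "b \<noteq> a1 / a2" for b
  proof -
    have Lb: "L b \<noteq> 0" using that a2 unfolding L_def by (auto simp: field_simps)
    have c: "lsQcoef a1 a2 0 b 1 = L b" by (simp add: lsQcoef_def L_def)
    have s: "lsSol a1 a2 0 b 1 = Nn b / L b" by (simp add: lsSol_def c Nn_def algebra_simps)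
    define d where "d = Nn b / L b"
    have Ld: "L b * d = Nn b" using Lb d_def by simp
    define Er where "Er = F 0 * (a1*(b - d) - a2*(1 - d)) + F b * (a1*(0-1) + a2*(1 - d)) + F 1 * (-a1*(b-d) - a2*(0-b))"
    have E: "Er + F d * L b = 0"
      using S'[of 0 b 1] Lb unfolding c s d_def[symmetric] Er_def
      by (simp add: dQa_def dQb_def dQc_def dQd_def L_def)
    have RE: "R b = L b * Er"
      unfolding R_def Er_def Ld[symmetric] by (simp add: algebra_simps)
    have "h b = L b^(N-2) * (L b * Er) + L b ^ N * F d"
      unfolding h_def RE d_def powsum[OF Lb] ..
    also have "L b ^ N = L b ^ (N-2) * L b * L b"
    proof -
      have e: "N-2+2 = N" using N3 by simp
      have "L b ^ N = L b ^ (N-2 + 2)" by (simp only: e)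
      also have "\<dots> = L b ^ (N-2) * L b * L b" by (simp add: power_add power2_eq_square mult.assoc)
      finally show ?thesis .
    qed
    finally have "h b = L b^(N-2) * L b * (Er + F d * L b)" by (simp add: algebra_simps)
    then show ?thesis using E by simp
  qed
  have hc: "isCont h (a1/a2)"
    unfolding h_def R_def L_def Nn_def F_def by (intro continuous_intros)
  have h0: "h (a1/a2) = 0" by (rule cont_pt[OF hc hz])
  have L0: "L (a1/a2) = 0" using a2 by (simp add: L_def)
  have "h (a1/a2) = (\<Sum>k\<le>N. coeff p k * Nn (a1/a2)^k * (if k = N then 1 else 0))"
  proof -
    have z: "(0::real) ^ (N-2) = 0" using N3 by simp
    show ?thesis unfolding h_def L0 z
      by (simp, intro sum.cong) (auto simp: power_0_left)
  qed
  also have "\<dots> = coeff p N * Nn (a1/a2)^N" by (simp add: if_distrib cong: if_cong)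
  finally have "coeff p N * Nn (a1/a2)^N = 0" using h0 by simp
  moreover have "Nn (a1/a2) \<noteq> 0" using a1 a2 a12 by (simp add: Nn_def)
  moreover have "coeff p N \<noteq> 0" 
  proof -
    have "p \<noteq> 0" using N3 N_def by auto
    then show ?thesis unfolding N_def by simp
  qed
  ultimately show False by simp
qed

lemma poly_deg2: "degree (p::real poly) \<le> 2 \<Longrightarrow> poly p x = coeff p 0 + coeff p 1 * x + coeff p 2 * x^2"
proof -
  assume d: "degree p \<le> 2"
  have "poly p x = (\<Sum>i\<le>2. coeff p i * x^i)"
    unfolding poly_altdef
    by (rule sum.mono_neutral_left) (use d in \<open>auto simp: coeff_eq_0\<close>)
  then show ?thesis by (simp add: numeral_2_eq_2)
qed

theorem mainTheorem1:
  fixes \<alpha>1 \<alpha>2 :: real and P :: "int \<Rightarrow> int \<Rightarrow> real poly" and \<gamma> :: nat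
  assumes "\<alpha>1 \<noteq> 0" and "\<alpha>2 \<noteq> 0" and "\<alpha>1 \<noteq> \<alpha>2"
    and "\<forall>n m. degree (P n m) \<le> \<gamma>"
  shows "is_lie_symmetry \<alpha>1 \<alpha>2 (\<lambda>n m. poly (P n m)) \<longleftrightarrow>
         (\<exists>c0 c1 c2. \<forall>n m x. poly (P n m) x = c0 + c1 * x + c2 * x^2)"
proof
  assume S: "is_lie_symmetry \<alpha>1 \<alpha>2 (\<lambda>n m. poly (P n m))"
  have R: "poly (P (n+1) m) x = poly (P n m) x \<and> poly (P n (m+1)) x = poly (P n m) x" for n m x
    using rels[OF S assms(1-3)] by simp
  have A: "poly (P n m) x = poly (P 0 m) x" for n m x
  proof (induction n rule: int_induct[where k=0])
    case base then show ?case by simp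
  next
    case (step1 i) then show ?case using R[of i m x] by simp
  next
    case (step2 i) then show ?case using R[of "i-1" m x] by simp
  qed
  have B: "poly (P 0 m) x = poly (P 0 0) x" for m x
  proof (induction m rule: int_induct[where k=0])
    case base then show ?case by simp
  next
    case (step1 i) then show ?case using R[of 0 i x] by simp
  next
    case (step2 i) then show ?case using R[of 0 "i-1" x] by simp
  qed
  have eq: "(\<lambda>n m. poly (P n m)) = (\<lambda>n m. poly (P 0 0))"
    by (intro ext) (metis A B)
  have "degree (P 0 0) \<le> 2"
    using deg_le2[of \<alpha>1 \<alpha>2 "P 0 0"] S assms(1-3) unfolding eq by simp
  then show "\<exists>c0 c1 c2. \<forall>n m x. poly (P n m) x = c0 + c1 * x + c2 * x^2"
    using poly_deg2 A B by metis
next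
  assume "\<exists>c0 c1 c2. \<forall>n m x. poly (P n m) x = c0 + c1 * x + c2 * x^2"
  then obtain c0 c1 c2 where h: "\<forall>n m x. poly (P n m) x = c0 + c1 * x + c2 * x^2" by blast
  have eq: "(\<lambda>n m. poly (P n m)) = (\<lambda>n m x. c0 + c1 * x + c2 * x^2)"
    using h by (intro ext) simp
  show "is_lie_symmetry \<alpha>1 \<alpha>2 (\<lambda>n m. poly (P n m))" unfolding eq by (rule if_dir)
qed

end
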